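(* Let $f$ be a transcendental meromorphic function projectable via $\exp_1$, and $g$ its exponential projection, written as $g(w)=w^\ell e^{2\pi i\Phi(w)}$ with $\ell\in\mathbb{Z}$ and $\Phi$ meromorphic in $\mathbb{C}^*$. Then $$\mathcal{C}(g)\cap\mathbb{C}^*=\exp_1\big(\mathcal{C}(f)\setminus f^{-1}(\infty)\big).$$ If $0$ is not an omitted value of $f'$, then $\#\mathcal{C}(f)=\infty$ and $\mathcal{C}(g)\cap\mathbb{C}^*\neq\emptyset$. Moreover, $0\in\mathcal{C}(g)$ (resp. $\infty\in\mathcal{C}(g)$) if and only if $g(0)$ (resp. $g(\infty)$) is defined and either $|\ell|\ge2$, or $\ell=0$ with $\Phi'(0)=0$ (resp. $\Phi'(\infty)=0$).
   Context: $\exp_1(z)=e^{2\pi iz}$; $f$ is projectable via $\exp_1$ if there is $g$ with $g\circ\exp_1=\exp_1\circ f$ wherever defined; here $f(z)=\ell z+\Phi(e^{2\pi iz})$. $g$ is meromorphic outside its closed countable set $\mathcal{E}(g)$ of essential singularities; $g(0)$ defined means $0\notin\mathcal{E}(g)$. $\mathcal{C}(\cdot)$ denotes the set of critical points: points in the domain of definition where the map is not locally injective (including multiple poles of $f$, and multiple preimages of essential singularities of $g$). $\Phi'(\infty)=0$ means the derivative in the local coordinate $1/w$ at $\infty$ vanishes. *)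

theory Defs
  imports "HOL-Complex_Analysis.Complex_Analysis" "HOL-Computational_Algebra.Polynomial"
begin

definition exp1 :: "complex \<Rightarrow> complex" where
  "exp1 z = exp (2 * of_real pi * \<i> * z)"

definition rational_fun :: "(complex \<Rightarrow> complex) \<Rightarrow> bool" where
  "rational_fun f \<longleftrightarrow> (\<exists>p q :: complex poly. q \<noteq> 0 \<and>
      (\<forall>z. poly q z \<noteq> 0 \<and> \<not> is_pole f z \<longrightarrow> f z = poly p z / poly q z))"

definition transcendental_mero :: "(complex \<Rightarrow> complex) \<Rightarrow> bool" where
  "transcendental_mero f \<longleftrightarrow> f nicely_meromorphic_on UNIV \<and> \<not> rational_fun f"

text \<open>\<open>h\<close> is defined (as a map into the Riemann sphere) at the point \<open>z\<close> of the
  plane: \<open>z\<close> is not an essential singularity, i.e. \<open>h\<close> is meromorphic at \<open>z\<close>.\<close>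
definition defined_at :: "(complex \<Rightarrow> complex) \<Rightarrow> complex \<Rightarrow> bool" where
  "defined_at h z \<longleftrightarrow> h meromorphic_on {z}"

text \<open>Value of \<open>h\<close> at \<open>z\<close> in the Riemann sphere \<open>complex option\<close>, where \<open>None\<close> is \<open>\<infinity>\<close>;
  removable singularities are filled in by the limit.\<close>
definition sphere_val :: "(complex \<Rightarrow> complex) \<Rightarrow> complex \<Rightarrow> complex option" where
  "sphere_val h z = (if is_pole h z then None else Some (remove_sings h z))"

text \<open>Critical points (in the plane): points of the domain of definition at which
  the map into the Riemann sphere is not locally injective.  This includes multiple
  poles.  Critical points at \<open>\<infinity>\<close> are handled via the chart \<open>1/w\<close>.\<close>
definition crit :: "(complex \<Rightarrow> complex) \<Rightarrow> complex set" where
  "crit h = {z. defined_at h z \<and> \<not> (\<exists>e>0. inj_on (sphere_val h) (ball z e))}"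

end

theory Submission
  imports Defs
begin


lemma L1:
  fixes h F :: "complex \<Rightarrow> complex"
  assumes r: "r > 0" and F: "F holomorphic_on ball z r"
    and eq: "\<And>u. u \<in> ball z r - {z} \<Longrightarrow> h u = F u"
  shows "z \<in> crit h \<longleftrightarrow> deriv F z = 0"
proof -
  have evF: "eventually (\<lambda>x. h x = F x) (at u)" if "u \<in> ball z r" for u
  proof -
    have "eventually (\<lambda>x. x \<in> ball z r - {z}) (at u)"
    proof (cases "u = z")
      case True thus ?thesis using r unfolding True by (intro eventually_at_in_open) auto
    next
      case False
      have "eventually (\<lambda>x. x \<in> ball z r) (at u)"
        using that by (intro eventually_at_in_open') auto
      moreover have "eventually (\<lambda>x. x \<noteq> z) (at u)"
        using False by (simp add: eventually_neq_at_within)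
      ultimately show ?thesis by eventually_elim auto
    qed
    thus ?thesis by eventually_elim (use eq in auto)
  qed
  have lim: "h \<midarrow>u\<rightarrow> F u" if "u \<in> ball z r" for u
  proof -
    have "F \<midarrow>u\<rightarrow> F u"
      using F that holomorphic_on_imp_continuous_on[OF F]
      by (metis at_within_open continuous_on_def open_ball)
    moreover have "eventually (\<lambda>x. F x = h x) (at u)" using evF[OF that] by (auto elim: eventually_mono)
    ultimately show ?thesis by (rule Lim_transform_eventually)
  qed
  have sv: "sphere_val h u = Some (F u)" if "u \<in> ball z r" for u
  proof -
    have "\<not> is_pole h u" using lim[OF that] by (metis at_neq_bot not_tendsto_and_filterlim_at_infinity is_pole_def)
    moreover have "remove_sings h u = F u" using lim[OF that] by (rule remove_sings_eqI)
    ultimately show ?thesis by (simp add: sphere_val_def)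
  qed
  have def: "defined_at h z"
  proof -
    have "isolated_singularity_at F z"
      using F r by (meson analytic_on_holomorphic holomorphic_on_subset isolated_singularity_at_def open_ball Diff_subset open_Diff finite_imp_closed finite.intros)
    hence "isolated_singularity_at h z"
      using evF[of z] r by (subst isolated_singularity_at_cong) (auto simp: eq_commute)
    moreover have "not_essential h z" using lim[of z] r by auto
    ultimately show ?thesis by (simp add: defined_at_def meromorphic_at_iff)
  qed
  have inj_iff: "inj_on (sphere_val h) (ball z e) \<longleftrightarrow> inj_on F (ball z e)" if "e \<le> r" for e
  proof -
    have "ball z e \<subseteq> ball z r" using that by auto
    hence "inj_on (sphere_val h) (ball z e) \<longleftrightarrow> inj_on (\<lambda>u. Some (F u)) (ball z e)"
      using sv by (intro inj_on_cong) auto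
    also have "\<dots> \<longleftrightarrow> inj_on F (ball z e)" by (simp add: inj_on_def)
    finally show ?thesis .
  qed
  have "(\<exists>e>0. inj_on (sphere_val h) (ball z e)) \<longleftrightarrow> (\<exists>e>0. inj_on F (ball z e))"
  proof
    assume "\<exists>e>0. inj_on (sphere_val h) (ball z e)"
    then obtain e where "e > 0" "inj_on (sphere_val h) (ball z e)" by auto
    hence "inj_on (sphere_val h) (ball z (min e r))" by (meson inj_on_subset min.cobounded1 subset_ball)
    hence "inj_on F (ball z (min e r))" using inj_iff by simp
    thus "\<exists>e>0. inj_on F (ball z e)" using \<open>e > 0\<close> r by (intro exI[of _ "min e r"]) auto
  next
    assume "\<exists>e>0. inj_on F (ball z e)"
    then obtain e where "e > 0" "inj_on F (ball z e)" by auto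
    hence "inj_on F (ball z (min e r))" by (meson inj_on_subset min.cobounded1 subset_ball)
    hence "inj_on (sphere_val h) (ball z (min e r))" using inj_iff by simp
    thus "\<exists>e>0. inj_on (sphere_val h) (ball z e)" using \<open>e > 0\<close> r by (intro exI[of _ "min e r"]) auto
  qed
  also have "\<dots> \<longleftrightarrow> deriv F z \<noteq> 0"
  proof
    assume "\<exists>e>0. inj_on F (ball z e)"
    then obtain e where "e > 0" "inj_on F (ball z e)" by auto
    hence "inj_on F (ball z (min e r))" by (meson inj_on_subset min.cobounded1 subset_ball)
    moreover have "F holomorphic_on ball z (min e r)" using F by (rule holomorphic_on_subset) auto
    ultimately show "deriv F z \<noteq> 0" using \<open>e > 0\<close> r
      by (intro holomorphic_injective_imp_regular[of F "ball z (min e r)"]) auto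
  next
    assume "deriv F z \<noteq> 0"
    from has_complex_derivative_locally_injective[OF F _ _ this] r
    obtain e where "e > 0" "inj_on F (ball z e)" by auto
    thus "\<exists>e>0. inj_on F (ball z e)" by auto
  qed
  finally show ?thesis using def unfolding crit_def by auto
qed

lemma L2:
  fixes h F :: "complex \<Rightarrow> complex"
  assumes r: "r > 0" and F: "F holomorphic_on ball z r" and F0: "F z = 0"
    and Fnz: "\<And>u. u \<in> ball z r - {z} \<Longrightarrow> F u \<noteq> 0"
    and eq: "\<And>u. u \<in> ball z r - {z} \<Longrightarrow> h u = inverse (F u)"
  shows "z \<in> crit h \<longleftrightarrow> deriv F z = 0"
proof -
  have evF: "eventually (\<lambda>x. x \<in> ball z r - {z}) (at u)" if "u \<in> ball z r" for u
  proof (cases "u = z")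
    case True thus ?thesis using r unfolding True by (intro eventually_at_in_open) auto
  next
    case False
    have "eventually (\<lambda>x. x \<in> ball z r) (at u)"
      using that by (intro eventually_at_in_open') auto
    moreover have "eventually (\<lambda>x. x \<noteq> z) (at u)"
      using False by (simp add: eventually_neq_at_within)
    ultimately show ?thesis by eventually_elim auto
  qed
  have Fc: "F \<midarrow>u\<rightarrow> F u" if "u \<in> ball z r" for u
    using F that holomorphic_on_imp_continuous_on[OF F]
    by (metis at_within_open continuous_on_def open_ball)
  have lim: "h \<midarrow>u\<rightarrow> inverse (F u)" if "u \<in> ball z r - {z}" for u
  proof -
    have "(\<lambda>x. inverse (F x)) \<midarrow>u\<rightarrow> inverse (F u)"
      using Fc[of u] Fnz[OF that] that by (intro tendsto_inverse) auto
    moreover have "eventually (\<lambda>x. inverse (F x) = h x) (at u)"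
      using evF[of u] that by (auto elim!: eventually_mono simp: eq)
    ultimately show ?thesis by (rule Lim_transform_eventually)
  qed
  have pole: "is_pole h z"
  proof -
    have "filterlim (\<lambda>x. inverse (F x)) at_infinity (at z)"
    proof -
      have "filterlim F (at 0) (at z)" unfolding filterlim_at
        using Fc[of z] r F0 evF[of z] Fnz by (auto elim!: eventually_mono)
      thus ?thesis by (rule filterlim_compose[OF filterlim_inverse_at_infinity])
    qed
    moreover have "eventually (\<lambda>x. inverse (F x) = h x) (at z)"
      using evF[of z] r by (auto elim!: eventually_mono simp: eq)
    ultimately show ?thesis unfolding is_pole_def[symmetric] using is_pole_transform[of "\<lambda>x. inverse (F x)" z h z] by blast
  qed
  have sv: "sphere_val h u = (if u = z then None else Some (inverse (F u)))" if "u \<in> ball z r" for u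
  proof (cases "u = z")
    case True thus ?thesis using pole by (simp add: sphere_val_def)
  next
    case False
    hence u: "u \<in> ball z r - {z}" using that by auto
    have "\<not> is_pole h u" using lim[OF u] by (metis at_neq_bot not_tendsto_and_filterlim_at_infinity is_pole_def)
    moreover have "remove_sings h u = inverse (F u)" using lim[OF u] by (rule remove_sings_eqI)
    ultimately show ?thesis using False by (simp add: sphere_val_def)
  qed
  have def: "defined_at h z"
  proof -
    have "h analytic_on ball z r - {z}"
    proof -
      have "(\<lambda>u. inverse (F u)) holomorphic_on ball z r - {z}"
        using F Fnz by (intro holomorphic_intros holomorphic_on_subset[OF F]) auto
      hence "h holomorphic_on ball z r - {z}"
        by (rule holomorphic_transform) (use eq in auto)
      thus ?thesis by (simp add: analytic_on_open open_Diff)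
    qed
    hence "isolated_singularity_at h z" using r by (auto simp: isolated_singularity_at_def)
    moreover have "not_essential h z" using pole by auto
    ultimately show ?thesis by (simp add: defined_at_def meromorphic_at_iff)
  qed
  have inj_iff: "inj_on (sphere_val h) (ball z e) \<longleftrightarrow> inj_on F (ball z e)" if "e \<le> r" "e > 0" for e
  proof -
    have sub: "ball z e \<subseteq> ball z r" using that by auto
    hence "inj_on (sphere_val h) (ball z e) \<longleftrightarrow> inj_on (\<lambda>u. if u = z then None else Some (inverse (F u))) (ball z e)"
      using sv sub by (intro inj_on_cong) (simp add: subset_iff)
    also have "\<dots> \<longleftrightarrow> inj_on F (ball z e)"
      unfolding inj_on_def
    proof (intro iffI ballI impI)
      fix x y assume A: "\<forall>x\<in>ball z e. \<forall>y\<in>ball z e. (if x = z then None else Some (inverse (F x))) = (if y = z then None else Some (inverse (F y))) \<longrightarrow> x = y"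
        and xy: "x \<in> ball z e" "y \<in> ball z e" "F x = F y"
      show "x = y"
      proof (cases "x = z \<or> y = z")
        case True
        have zero: "F u = 0 \<longleftrightarrow> u = z" if "u \<in> ball z e" for u
          using that sub Fnz[of u] F0 by blast
        show ?thesis using zero[OF xy(1)] zero[OF xy(2)] xy(3) True by metis
      next
        case False
        hence "(if x = z then None else Some (inverse (F x))) = (if y = z then None else Some (inverse (F y)))"
          using xy(3) by simp
        thus ?thesis using A xy(1,2) by blast
      qed
    next
      fix x y assume A: "\<forall>x\<in>ball z e. \<forall>y\<in>ball z e. F x = F y \<longrightarrow> x = y"
        and xy: "x \<in> ball z e" "y \<in> ball z e"
        and e: "(if x = z then None else Some (inverse (F x))) = (if y = z then None else Some (inverse (F y)))"
      show "x = y"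
      proof (cases "x = z \<or> y = z")
        case True thus ?thesis using e by (auto split: if_splits)
      next
        case False
        hence "F x = F y" using e by simp
        thus ?thesis using A xy by blast
      qed
    qed
    finally show ?thesis .
  qed
  have "(\<exists>e>0. inj_on (sphere_val h) (ball z e)) \<longleftrightarrow> (\<exists>e>0. inj_on F (ball z e))"
  proof
    assume "\<exists>e>0. inj_on (sphere_val h) (ball z e)"
    then obtain e where "e > 0" "inj_on (sphere_val h) (ball z e)" by auto
    hence "inj_on (sphere_val h) (ball z (min e r))" by (meson inj_on_subset min.cobounded1 subset_ball)
    hence "inj_on F (ball z (min e r))" using inj_iff \<open>e > 0\<close> r by simp
    thus "\<exists>e>0. inj_on F (ball z e)" using \<open>e > 0\<close> r by (intro exI[of _ "min e r"]) auto
  next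
    assume "\<exists>e>0. inj_on F (ball z e)"
    then obtain e where "e > 0" "inj_on F (ball z e)" by auto
    hence "inj_on F (ball z (min e r))" by (meson inj_on_subset min.cobounded1 subset_ball)
    hence "inj_on (sphere_val h) (ball z (min e r))" using inj_iff \<open>e > 0\<close> r by simp
    thus "\<exists>e>0. inj_on (sphere_val h) (ball z e)" using \<open>e > 0\<close> r by (intro exI[of _ "min e r"]) auto
  qed
  also have "\<dots> \<longleftrightarrow> deriv F z \<noteq> 0"
  proof
    assume "\<exists>e>0. inj_on F (ball z e)"
    then obtain e where "e > 0" "inj_on F (ball z e)" by auto
    hence "inj_on F (ball z (min e r))" by (meson inj_on_subset min.cobounded1 subset_ball)
    moreover have "F holomorphic_on ball z (min e r)" using F by (rule holomorphic_on_subset) auto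
    ultimately show "deriv F z \<noteq> 0" using \<open>e > 0\<close> r
      by (intro holomorphic_injective_imp_regular[of F "ball z (min e r)"]) auto
  next
    assume "deriv F z \<noteq> 0"
    from has_complex_derivative_locally_injective[OF F _ _ this] r
    obtain e where "e > 0" "inj_on F (ball z e)" by auto
    thus "\<exists>e>0. inj_on F (ball z e)" by auto
  qed
  finally show ?thesis using def unfolding crit_def by auto
qed



lemma freq_contra:
  assumes "\<And>e. e > 0 \<Longrightarrow> \<exists>u. u \<noteq> w \<and> dist u w < e \<and> Q u"
    and "eventually (\<lambda>u. \<not> Q u) (at w)"
  shows False
proof -
  from assms(2) obtain d where "d > 0" "\<And>x. x \<noteq> w \<and> dist x w < d \<longrightarrow> \<not> Q x"
    unfolding eventually_at by auto
  with assms(1)[OF \<open>d > 0\<close>] show False by blast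
qed

lemma exp_nat_shift: "exp (2 * of_real pi * \<i> * (of_nat n + a)) = exp (2 * of_real pi * \<i> * a)"
proof -
  have "2 * of_real pi * \<i> * (of_nat n + a) = of_nat n * (2 * of_real pi * \<i>) + 2 * of_real pi * \<i> * a"
    by (simp add: algebra_simps)
  thus ?thesis by (simp add: exp_add exp_of_nat_mult)
qed

lemma E_ess:
  fixes \<Psi> k :: "complex \<Rightarrow> complex" and m :: int
  assumes iso: "isolated_singularity_at \<Psi> w" and pole: "is_pole \<Psi> w" and w: "w \<noteq> 0"
    and ev: "eventually (\<lambda>u. k u = u powi m * exp (2 * of_real pi * \<i> * \<Psi> u)) (at w)"
  shows "\<not> not_essential k w"
proof -
  obtain r0 where r0: "r0 > 0" "\<Psi> analytic_on ball w r0 - {w}"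
    using iso by (auto simp: isolated_singularity_at_def)
  have ev1: "eventually (\<lambda>u. u \<in> ball w r0 - {w}) (at w)"
    using r0 by (intro eventually_at_in_open) auto
  have ev2: "eventually (\<lambda>u. 1 \<le> norm (\<Psi> u)) (at w)"
    using pole unfolding is_pole_def filterlim_at_infinity[OF order_refl] by auto
  have "eventually (\<lambda>u. u \<in> ball w r0 - {w} \<and> \<Psi> u \<noteq> 0 \<and> k u = u powi m * exp (2 * of_real pi * \<i> * \<Psi> u)) (at w)"
    using ev1 ev2 ev by eventually_elim auto
  then obtain r where r: "r > 0" and
    rP: "\<And>u. u \<noteq> w \<Longrightarrow> dist u w < r \<Longrightarrow> u \<in> ball w r0 - {w} \<and> \<Psi> u \<noteq> 0 \<and> k u = u powi m * exp (2 * of_real pi * \<i> * \<Psi> u)"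
    unfolding eventually_at by auto
  have rr0: "ball w r - {w} \<subseteq> ball w r0 - {w}"
    using rP by (auto simp: dist_commute)
  have holo: "\<Psi> holomorphic_on ball w r - {w}"
    using r0(2) rr0 by (meson analytic_imp_holomorphic holomorphic_on_subset)
  define R where "R = (\<lambda>x. if x = w then 0 else inverse (\<Psi> x))"
  have Rholo: "R holomorphic_on ball w r"
    unfolding R_def using holo pole rP by (intro is_pole_inverse_holomorphic) (auto simp: dist_commute)
  have P: "\<exists>u. u \<noteq> w \<and> dist u w < e \<and> (\<exists>n::nat. \<Psi> u = of_nat n + a)" if e: "e > 0" and a: "a \<in> {0, 1/2}" for e a
  proof -
    define e' where "e' = min e r"
    have e': "e' > 0" "e' \<le> r" "e' \<le> e" using e r by (auto simp: e'_def)
    have Rh: "R holomorphic_on ball w e'" using Rholo e'(2) by (rule holomorphic_on_subset[OF _ subset_ball])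
    have nc: "\<not> R constant_on ball w e'"
    proof
      assume "R constant_on ball w e'"
      then obtain c where c: "\<And>x. x \<in> ball w e' \<Longrightarrow> R x = c" by (auto simp: constant_on_def)
      define u where "u = w + of_real (e'/2)"
      have u: "u \<noteq> w" "dist u w < r" using e' by (auto simp: u_def dist_norm)
      have "u \<in> ball w e'" using e' by (auto simp: u_def dist_norm)
      hence "R u = R w" using c e' by simp
      thus False using rP[OF u] by (simp add: R_def u(1))
    qed
    have "open (R ` ball w e')"
      by (rule open_mapping_thm[OF Rh]) (use nc in auto)
    moreover have "0 \<in> R ` ball w e'" using e' by (auto simp: R_def intro!: image_eqI[of _ _ w])
    ultimately obtain \<delta> where \<delta>: "\<delta> > 0" "ball 0 \<delta> \<subseteq> R ` ball w e'"
      by (meson openE)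
    define n :: nat where "n = nat (ceiling (1/\<delta>)) + 1"
    have n1: "real n > 1/\<delta>" unfolding n_def by linarith
    have ar: "a = of_real (Re a)" "Re a \<ge> 0" using a by (auto simp: complex_eq_iff)
    define t where "t = real n + Re a"
    have t1: "t > 1/\<delta>" using n1 ar by (simp add: t_def)
    have "1/\<delta> > 0" using \<delta> by simp
    hence t: "t > 1/\<delta>" "t > 0" using t1 by linarith+
    have tt: "of_nat n + a = of_real t" using ar by (simp add: t_def)
    have "inverse t < \<delta>" using t \<delta> by (simp add: field_simps)
    hence "complex_of_real (inverse t) \<in> ball 0 \<delta>" using t by (simp add: norm_inverse)
    then obtain u where u: "u \<in> ball w e'" "R u = of_real (inverse t)" using \<delta> by auto
    have uw: "u \<noteq> w" using u t by (auto simp: R_def)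
    hence "inverse (\<Psi> u) = of_real (inverse t)" using u by (simp add: R_def)
    hence "\<Psi> u = of_real t" by (metis inverse_inverse_eq of_real_inverse)
    hence "\<Psi> u = of_nat n + a" using tt by simp
    thus ?thesis using uw u e' by (intro exI[of _ u]) (auto simp: dist_commute)
  qed
  have P2: "\<exists>u. u \<noteq> w \<and> dist u w < e \<and> k u = c * u powi m" if e: "e > 0" and a: "a \<in> {0, 1/2}"
    and c: "c = exp (2 * of_real pi * \<i> * a)" for e a c
  proof -
    obtain u n where u: "u \<noteq> w" "dist u w < min e r" "\<Psi> u = of_nat n + a"
      using P[of "min e r" a] e r a by auto
    have "k u = u powi m * exp (2 * of_real pi * \<i> * \<Psi> u)" using rP[of u] u by auto
    also have "\<dots> = c * u powi m" using u(3) c exp_nat_shift[of n a] by simp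
    finally show ?thesis using u by (intro exI[of _ u]) auto
  qed
  have Pp: "\<exists>u. u \<noteq> w \<and> dist u w < e \<and> k u = 1 * u powi m" if "e > 0" for e
    using P2[OF that, of 0] by simp
  have Pm: "\<exists>u. u \<noteq> w \<and> dist u w < e \<and> k u = (-1) * u powi m" if "e > 0" for e
  proof -
    have "exp (2 * of_real pi * \<i> * (1/2)) = -1" by simp
    thus ?thesis using P2[OF that, of "1/2" "-1"] by simp
  qed
  have cont: "(\<lambda>u. u powi m) \<midarrow>w\<rightarrow> w powi m"
    using w by (intro tendsto_intros) auto
  have lim0: "L = 0" if "g \<midarrow>w\<rightarrow> L" "\<And>e. e > 0 \<Longrightarrow> \<exists>u. u \<noteq> w \<and> dist u w < e \<and> g u = 0" for g :: "complex \<Rightarrow> complex" and L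
  proof (rule ccontr)
    assume "L \<noteq> 0"
    hence "eventually (\<lambda>u. dist (g u) L < norm L) (at w)"
      using that(1) by (auto simp: tendsto_iff)
    hence "eventually (\<lambda>u. \<not> g u = 0) (at w)" by eventually_elim auto
    thus False using freq_contra[OF that(2)] by blast
  qed
  have wm: "w powi m \<noteq> 0" using w by simp
  show ?thesis
  proof
    assume "not_essential k w"
    then consider c where "k \<midarrow>w\<rightarrow> c" | "is_pole k w" unfolding not_essential_def by blast
    thus False
    proof cases
      case (1 c)
      have "c - w powi m = 0"
      proof (rule lim0)
        show "(\<lambda>u. k u - u powi m) \<midarrow>w\<rightarrow> c - w powi m" using tendsto_diff[OF 1 cont] .
        show "\<exists>u. u \<noteq> w \<and> dist u w < e \<and> k u - u powi m = 0" if "e > 0" for e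
          using Pp[OF that] by auto
      qed
      moreover have "c + w powi m = 0"
      proof (rule lim0)
        show "(\<lambda>u. k u + u powi m) \<midarrow>w\<rightarrow> c + w powi m" using tendsto_add[OF 1 cont] .
        show "\<exists>u. u \<noteq> w \<and> dist u w < e \<and> k u + u powi m = 0" if "e > 0" for e
          using Pm[OF that] by auto
      qed
      ultimately have "w powi m + w powi m = 0" by (simp add: algebra_simps)
      hence "2 * w powi m = 0" by (simp only: mult_2)
      thus False using wm by simp
    next
      case 2
      define B where "B = norm (w powi m) + 1"
      have "B + 1 > 0" by (simp add: B_def add_pos_nonneg)
      hence "eventually (\<lambda>u. B + 1 \<le> norm (k u)) (at w)"
        using 2 unfolding is_pole_def filterlim_at_infinity[OF order_refl] by blast
      moreover have "eventually (\<lambda>u. dist (u powi m) (w powi m) < 1) (at w)"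
        using cont by (auto simp: tendsto_iff)
      ultimately have "eventually (\<lambda>u. \<not> k u = 1 * u powi m) (at w)"
      proof eventually_elim
        case (elim u)
        have "norm (u powi m) \<le> norm (w powi m) + dist (u powi m) (w powi m)"
          by (metis dist_norm norm_triangle_sub)
        hence "norm (u powi m) < B" using elim(2) by (simp add: B_def)
        thus ?case using elim(1) by auto
      qed
      thus False using freq_contra[OF Pp] by blast
    qed
  qed
qed

lemma D_deriv:
  fixes E :: "complex \<Rightarrow> complex"
  assumes E: "E holomorphic_on ball 0 r" and r: "r > 0"
  shows "deriv (\<lambda>u. u ^ n * E u) 0 = (if n = 0 then deriv E 0 else if n = 1 then E 0 else 0)"
proof -
  have dE: "(E has_field_derivative deriv E 0) (at 0)"
    using E r by (intro holomorphic_derivI) auto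
  note d = DERIV_imp_deriv[OF DERIV_mult[OF DERIV_power[OF DERIV_ident, where n=n] dE]]
  show ?thesis using d by (cases n) (auto simp: power_0_left)
qed

lemma LOG:
  fixes \<Psi> h :: "complex \<Rightarrow> complex" and j :: int
  assumes r: "r > 0" and \<Psi>: "\<Psi> holomorphic_on ball 0 r - {0}"
    and h: "h holomorphic_on ball 0 r" and hnz: "\<And>u. u \<in> ball 0 r \<Longrightarrow> h u \<noteq> 0"
    and eq: "\<And>u. u \<in> ball 0 r - {0} \<Longrightarrow> exp (2 * of_real pi * \<i> * \<Psi> u) = u powi j * h u"
  shows "\<exists>\<Psi>'. \<Psi>' holomorphic_on ball 0 r \<and> (\<forall>u\<in>ball 0 r - {0}. \<Psi> u = \<Psi>' u)"
proof -
  obtain L where L: "L holomorphic_on ball 0 r" "\<And>x. x \<in> ball 0 r \<Longrightarrow> exp (L x) = h x"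
    using holomorphic_logarithm_exists[of "ball 0 r" h 0] h hnz r by auto
  define S where "S = ball (0::complex) r - {0}"
  have S: "open S" "connected S" unfolding S_def by (auto intro!: connected_punctured_ball)
  define \<psi> where "\<psi> = (\<lambda>u. 2 * of_real pi * \<i> * \<Psi> u - L u)"
  have \<psi>h: "\<psi> holomorphic_on S" unfolding \<psi>_def S_def
    using \<Psi> L(1) by (intro holomorphic_intros) (auto intro: holomorphic_on_subset)
  have exp\<psi>: "exp (\<psi> u) = u powi j" if "u \<in> S" for u
  proof -
    have "exp (\<psi> u) = exp (2 * of_real pi * \<i> * \<Psi> u) / exp (L u)"
      by (simp add: \<psi>_def exp_diff)
    also have "\<dots> = u powi j * h u / h u" using that eq L(2) by (auto simp: S_def)
    also have "\<dots> = u powi j" using hnz that by (auto simp: S_def)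
    finally show ?thesis .
  qed
  have d\<psi>: "(\<psi> has_field_derivative (of_int j / u)) (at u)" if u: "u \<in> S" for u
  proof -
    have u0: "u \<noteq> 0" using u by (auto simp: S_def)
    have d1: "(\<psi> has_field_derivative deriv \<psi> u) (at u)"
      using \<psi>h S u by (intro holomorphic_derivI) auto
    have "((\<lambda>x. exp (\<psi> x)) has_field_derivative exp (\<psi> u) * deriv \<psi> u) (at u)"
      using d1 by (auto intro!: derivative_eq_intros)
    hence "((\<lambda>x. x powi j) has_field_derivative exp (\<psi> u) * deriv \<psi> u) (at u)"
      by (rule has_field_derivative_transform_within_open[OF _ S(1) u]) (use exp\<psi> in auto)
    moreover have "((\<lambda>x. x powi j) has_field_derivative of_int j * u powi (j - 1) * 1) (at u)"
      using u0 by (intro DERIV_power_int DERIV_ident) auto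
    ultimately have "exp (\<psi> u) * deriv \<psi> u = of_int j * u powi (j - 1)"
      using DERIV_unique by fastforce
    hence "u powi j * deriv \<psi> u = of_int j * (u powi j / u)"
      using exp\<psi>[OF u] u0 by (simp add: power_int_diff)
    hence "deriv \<psi> u = of_int j / u"
      using u0 by (simp add: field_simps)
    thus ?thesis using d1 by simp
  qed
  have j0: "j = 0"
  proof -
    define \<gamma> where "\<gamma> = circlepath (0::complex) (r/2)"
    have img: "path_image \<gamma> \<subseteq> S" using r by (auto simp: \<gamma>_def S_def)
    have "((\<lambda>u. of_int j / u) has_contour_integral 0) \<gamma>"
      by (rule Cauchy_theorem_primitive[of S \<psi>]) (use d\<psi> img in \<open>auto simp: \<gamma>_def intro: has_field_derivative_at_within\<close>)
    moreover have "((\<lambda>u. (\<lambda>_. of_int j) u / (u - 0)) has_contour_integral (2 * of_real pi * \<i> * of_int j)) \<gamma>"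
      unfolding \<gamma>_def by (rule Cauchy_integral_circlepath_simple) (use r in auto)
    ultimately have "2 * of_real pi * \<i> * (of_int j :: complex) = 0"
      using has_contour_integral_unique by fastforce
    thus ?thesis by simp
  qed
  have "\<forall>x\<in>S - {}. DERIV \<psi> x :> 0" using d\<psi> j0 by simp
  moreover have "continuous_on S \<psi>" using \<psi>h by (rule holomorphic_on_imp_continuous_on)
  ultimately obtain c where c: "\<And>x. x \<in> S \<Longrightarrow> \<psi> x = c"
    using DERIV_zero_connected_constant[OF S(2) S(1) finite.emptyI] by metis
  define \<Psi>' where "\<Psi>' = (\<lambda>u. (c + L u) / (2 * of_real pi * \<i>))"
  have "\<Psi>' holomorphic_on ball 0 r" unfolding \<Psi>'_def using L(1) by (intro holomorphic_intros) auto
  moreover have "\<Psi> u = \<Psi>' u" if "u \<in> ball 0 r - {0}" for u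
  proof -
    have "\<psi> u = c" using c that by (auto simp: S_def)
    thus ?thesis by (simp add: \<Psi>'_def \<psi>_def field_simps)
  qed
  ultimately show ?thesis by blast
qed

lemma M:
  fixes \<Psi> k :: "complex \<Rightarrow> complex" and m :: int
  assumes iso: "\<And>w. w \<noteq> 0 \<Longrightarrow> isolated_singularity_at \<Psi> w"
    and nice: "\<And>w. w \<noteq> 0 \<Longrightarrow> \<not> is_pole \<Psi> w \<Longrightarrow> \<Psi> analytic_on {w}"
    and keq: "\<And>u. u \<noteq> 0 \<Longrightarrow> \<not> is_pole \<Psi> u \<Longrightarrow> k u = u powi m * exp (2 * of_real pi * \<i> * \<Psi> u)"
    and def: "defined_at k 0"
  shows "0 \<in> crit k \<longleftrightarrow> (\<bar>m\<bar> \<ge> 2 \<or> (m = 0 \<and> deriv (remove_sings \<Psi>) 0 = 0))"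
proof -
  have kiso: "isolated_singularity_at k 0" and kne: "not_essential k 0"
    using def by (auto simp: defined_at_def meromorphic_at_iff)
  obtain r1 where r1: "r1 > 0" "k analytic_on ball 0 r1 - {0}"
    using kiso by (auto simp: isolated_singularity_at_def)
  have np: "\<not> is_pole \<Psi> u" if u: "u \<in> ball 0 r1 - {0}" for u
  proof
    assume p: "is_pole \<Psi> u"
    have u0: "u \<noteq> 0" using u by auto
    have "eventually (\<lambda>v. k v = v powi m * exp (2 * of_real pi * \<i> * \<Psi> v)) (at u)"
      using eventually_not_pole[OF iso[OF u0]] eventually_neq_at_within[of 0 u UNIV]
      by eventually_elim (auto intro: keq)
    from E_ess[OF iso[OF u0] p u0 this] have "\<not> not_essential k u" .
    moreover have "k analytic_on {u}" using r1(2) u by (meson analytic_on_analytic_at)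
    ultimately show False using not_essential_analytic by blast
  qed
  define S1 where "S1 = ball (0::complex) r1 - {0}"
  have \<Psi>h: "\<Psi> holomorphic_on S1"
  proof -
    have "\<Psi> analytic_on S1" proof (rule analytic_on_analytic_at[THEN iffD2], intro ballI)
      fix u assume "u \<in> S1"
      hence u: "u \<in> ball 0 r1 - {0}" by (simp add: S1_def)
      hence "u \<noteq> 0" by blast
      thus "\<Psi> analytic_on {u}" by (rule nice[OF _ np[OF u]])
    qed
    thus ?thesis by (rule analytic_imp_holomorphic)
  qed
  have keq1: "k u = u powi m * exp (2 * of_real pi * \<i> * \<Psi> u)" if "u \<in> S1" for u
    using keq np that by (auto simp: S1_def)
  have "eventually (\<lambda>u. u \<in> S1) (at 0)"
    unfolding S1_def using r1 by (intro eventually_at_in_open) auto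
  hence "eventually (\<lambda>u. k u \<noteq> 0) (at 0)"
    by eventually_elim (auto simp: keq1 S1_def)
  hence fr: "\<exists>\<^sub>F u in at 0. k u \<noteq> 0"
    by (intro eventually_frequently) auto
  define n where "n = zorder k 0"
  define hz where "hz = zor_poly k 0"
  obtain r2 where r2: "r2 > 0" "hz holomorphic_on cball 0 r2"
     "\<And>w. w \<in> cball 0 r2 - {0} \<Longrightarrow> k w = hz w * (w - 0) powi n \<and> hz w \<noteq> 0"
    and hz0: "hz 0 \<noteq> 0"
    using zorder_exist[OF kiso kne fr] unfolding n_def hz_def by blast
  define \<rho> where "\<rho> = min r1 r2"
  have \<rho>: "\<rho> > 0" using r1 r2 by (simp add: \<rho>_def)
  have sub1: "ball 0 \<rho> - {0} \<subseteq> S1" by (auto simp: \<rho>_def S1_def)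
  have "\<exists>\<Psi>'. \<Psi>' holomorphic_on ball 0 \<rho> \<and> (\<forall>u\<in>ball 0 \<rho> - {0}. \<Psi> u = \<Psi>' u)"
  proof (rule LOG[OF \<rho>, of \<Psi> hz "n - m"])
    show "\<Psi> holomorphic_on ball 0 \<rho> - {0}" using \<Psi>h sub1 by (rule holomorphic_on_subset)
    show "hz holomorphic_on ball 0 \<rho>" using r2(2) by (rule holomorphic_on_subset) (auto simp: \<rho>_def)
    show "hz u \<noteq> 0" if "u \<in> ball 0 \<rho>" for u
      using that r2(3)[of u] hz0 by (cases "u = 0") (auto simp: \<rho>_def)
    show "exp (2 * of_real pi * \<i> * \<Psi> u) = u powi (n - m) * hz u" if u: "u \<in> ball 0 \<rho> - {0}" for u
    proof -
      have u0: "u \<noteq> 0" using u by auto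
      have "u powi m * exp (2 * of_real pi * \<i> * \<Psi> u) = hz u * u powi n"
        using keq1[of u] r2(3)[of u] u sub1 by (auto simp: \<rho>_def)
      hence "exp (2 * of_real pi * \<i> * \<Psi> u) = hz u * u powi n / u powi m"
        using u0 by (simp add: field_simps)
      also have "\<dots> = u powi (n - m) * hz u" using u0 by (simp add: power_int_diff)
      finally show ?thesis .
    qed
  qed
  then obtain \<Psi>' where \<Psi>': "\<Psi>' holomorphic_on ball 0 \<rho>" "\<And>u. u \<in> ball 0 \<rho> - {0} \<Longrightarrow> \<Psi> u = \<Psi>' u"
    by blast
  have \<Psi>'c: "\<Psi>' \<midarrow>u\<rightarrow> \<Psi>' u" if "u \<in> ball 0 \<rho>" for u
    using holomorphic_on_imp_continuous_on[OF \<Psi>'(1)] that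
    by (metis at_within_open continuous_on_def open_ball)
  have rs: "remove_sings \<Psi> u = \<Psi>' u" if u: "u \<in> ball 0 \<rho>" for u
  proof (rule remove_sings_eqI)
    have "eventually (\<lambda>v. v \<in> ball 0 \<rho> - {0}) (at u)"
    proof (cases "u = 0")
      case True thus ?thesis using \<rho> unfolding True by (intro eventually_at_in_open) auto
    next
      case False
      have "eventually (\<lambda>v. v \<in> ball 0 \<rho>) (at u)"
        using u by (intro eventually_at_in_open') auto
      thus ?thesis using eventually_neq_at_within[of 0 u UNIV] by eventually_elim auto
    qed
    hence "eventually (\<lambda>v. \<Psi>' v = \<Psi> v) (at u)" by eventually_elim (use \<Psi>'(2) in auto)
    thus "\<Psi> \<midarrow>u\<rightarrow> \<Psi>' u" using \<Psi>'c[OF u] Lim_transform_eventually by blast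
  qed
  have drs: "deriv (remove_sings \<Psi>) 0 = deriv \<Psi>' 0"
  proof (rule deriv_cong_ev)
    have "eventually (\<lambda>v. v \<in> ball 0 \<rho>) (nhds (0::complex))"
      using \<rho> by (intro eventually_nhds_in_open) auto
    thus "eventually (\<lambda>v. remove_sings \<Psi> v = \<Psi>' v) (nhds 0)" by eventually_elim (use rs in auto)
  qed auto
  define E where "E = (\<lambda>u. exp (2 * of_real pi * \<i> * \<Psi>' u))"
  have Eh: "E holomorphic_on ball 0 \<rho>" unfolding E_def using \<Psi>'(1) by (intro holomorphic_intros)
  define E' where "E' = (\<lambda>u. exp (- (2 * of_real pi * \<i> * \<Psi>' u)))"
  have E'h: "E' holomorphic_on ball 0 \<rho>" unfolding E'_def using \<Psi>'(1) by (intro holomorphic_intros)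
  have dE: "deriv E 0 = E 0 * (2 * of_real pi * \<i> * deriv \<Psi>' 0)"
  proof -
    have "(\<Psi>' has_field_derivative deriv \<Psi>' 0) (at 0)"
      using \<Psi>'(1) \<rho> by (intro holomorphic_derivI) auto
    hence "(E has_field_derivative E 0 * (2 * of_real pi * \<i> * deriv \<Psi>' 0)) (at 0)"
      unfolding E_def by (auto intro!: derivative_eq_intros)
    thus ?thesis by (rule DERIV_imp_deriv)
  qed
  have keq2: "k u = u powi m * E u" if "u \<in> ball 0 \<rho> - {0}" for u
    using keq1[of u] \<Psi>'(2)[OF that] that sub1 by (auto simp: E_def)
  show ?thesis
  proof (cases "m \<ge> 0")
    case True
    define N where "N = nat m"
    have N: "m = int N" using True by (auto simp: N_def)
    have "0 \<in> crit k \<longleftrightarrow> deriv (\<lambda>u. u ^ N * E u) 0 = 0"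
    proof (rule L1[OF \<rho>])
      show "(\<lambda>u. u ^ N * E u) holomorphic_on ball 0 \<rho>" using Eh by (intro holomorphic_intros)
      show "k u = u ^ N * E u" if "u \<in> ball 0 \<rho> - {0}" for u
        using keq2[OF that] N by simp
    qed
    also have "\<dots> \<longleftrightarrow> (\<bar>m\<bar> \<ge> 2 \<or> (m = 0 \<and> deriv (remove_sings \<Psi>) 0 = 0))"
      using D_deriv[OF Eh \<rho>, of N] dE drs N by (auto simp: E_def)
    finally show ?thesis .
  next
    case False
    define N where "N = nat (- m)"
    have N: "m = - int N" "N \<ge> 1" using False by (auto simp: N_def)
    have "0 \<in> crit k \<longleftrightarrow> deriv (\<lambda>u. u ^ N * E' u) 0 = 0"
    proof (rule L2[OF \<rho>])
      show "(\<lambda>u. u ^ N * E' u) holomorphic_on ball 0 \<rho>" using E'h by (intro holomorphic_intros)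
      show "0 ^ N * E' 0 = 0" using N by simp
      show "u ^ N * E' u \<noteq> 0" if "u \<in> ball 0 \<rho> - {0}" for u
        using that by (auto simp: E'_def)
      show "k u = inverse (u ^ N * E' u)" if "u \<in> ball 0 \<rho> - {0}" for u
        using keq2[OF that] N that by (simp add: E_def E'_def power_int_minus exp_minus field_simps)
    qed
    also have "\<dots> \<longleftrightarrow> (\<bar>m\<bar> \<ge> 2 \<or> (m = 0 \<and> deriv (remove_sings \<Psi>) 0 = 0))"
      using D_deriv[OF E'h \<rho>, of N] N by (auto simp: E'_def)
    finally show ?thesis .
  qed
qed

lemma exp1_nz: "exp1 z \<noteq> 0" by (simp add: exp1_def)

lemma exp1_shift: "exp1 (z + of_int n) = exp1 z"
proof -
  have "2 * of_real pi * \<i> * (z + of_int n) = 2 * of_real pi * \<i> * z + \<i> * (of_int n * (of_real pi * 2))"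
    by (simp add: algebra_simps)
  thus ?thesis unfolding exp1_def by (simp only: exp_plus_2pin)
qed

lemma exp1_surj: "w \<noteq> 0 \<Longrightarrow> exp1 (Ln w / (2 * of_real pi * \<i>)) = w"
  unfolding exp1_def by simp

lemma exp1_deriv: "(exp1 has_field_derivative (2 * of_real pi * \<i> * exp1 z)) (at z)"
  unfolding exp1_def by (auto intro!: derivative_eq_intros)

lemma exp1_holo: "exp1 holomorphic_on S"
  unfolding exp1_def by (intro holomorphic_intros)

lemma exp1_cont: "exp1 \<midarrow>z\<rightarrow> exp1 z"
  unfolding exp1_def by (intro tendsto_intros)

lemma exp1_filterlim: "filterlim exp1 (at (exp1 z)) (at z)"
  unfolding filterlim_at
proof
  have "eventually (\<lambda>u. dist u z < 1) (at z)"
    unfolding eventually_at by (intro exI[of _ 1]) auto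
  moreover have "eventually (\<lambda>u. u \<noteq> z) (at z)" by (rule eventually_neq_at_within)
  ultimately show "eventually (\<lambda>u. exp1 u \<in> UNIV \<and> exp1 u \<noteq> exp1 z) (at z)"
  proof eventually_elim
    case (elim u)
    show ?case
    proof (intro conjI notI)
      assume "exp1 u = exp1 z"
      then obtain n :: int where n: "2 * of_real pi * \<i> * u = 2 * of_real pi * \<i> * z + complex_of_real (real_of_int (2 * n) * pi) * \<i>"
        unfolding exp1_def exp_eq by blast
      hence "2 * of_real pi * \<i> * u = 2 * of_real pi * \<i> * (z + of_int n)"
        by (simp add: algebra_simps)
      hence un: "u = z + of_int n" by simp
      hence "n \<noteq> 0" using elim by auto
      hence "norm (of_int n :: complex) \<ge> 1" by (simp add: norm_of_int)
      thus False using elim un by (simp add: dist_norm)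
    qed simp
  qed
  show "exp1 \<midarrow>z\<rightarrow> exp1 z" by (rule exp1_cont)
qed

lemma F_pole:
  fixes f \<Phi> :: "complex \<Rightarrow> complex" and l :: int
  assumes fm: "f nicely_meromorphic_on UNIV"
    and f_eq: "\<And>z. \<not> is_pole f z \<Longrightarrow> f z = of_int l * z + \<Phi> (exp1 z)"
    and p: "is_pole \<Phi> (exp1 z)"
  shows "is_pole f z"
proof -
  have iso: "isolated_singularity_at f z"
    using fm by (intro meromorphic_on_isolated_singularity)
      (auto simp: nicely_meromorphic_on_def intro: meromorphic_on_subset)
  have "filterlim (\<lambda>u. \<Phi> (exp1 u)) at_infinity (at z)"
    using filterlim_compose[OF p[unfolded is_pole_def] exp1_filterlim] .
  hence "filterlim (\<lambda>u. of_int l * u + \<Phi> (exp1 u)) at_infinity (at z)"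
    by (intro tendsto_add_filterlim_at_infinity[of _ "of_int l * z"]) (auto intro!: tendsto_intros)
  moreover have "eventually (\<lambda>u. of_int l * u + \<Phi> (exp1 u) = f u) (at z)"
    using eventually_not_pole[OF iso] by eventually_elim (simp add: f_eq)
  ultimately show ?thesis unfolding is_pole_def[symmetric]
    using is_pole_transform[of "\<lambda>u. of_int l * u + \<Phi> (exp1 u)" z f z] by blast
qed

lemma F_reg:
  fixes f \<Phi> :: "complex \<Rightarrow> complex" and l :: int
  assumes fm: "f nicely_meromorphic_on UNIV"
    and \<Phi>m: "\<Phi> nicely_meromorphic_on (- {0})"
    and f_eq: "\<And>z. \<not> is_pole f z \<Longrightarrow> f z = of_int l * z + \<Phi> (exp1 z)"
    and np: "\<not> is_pole \<Phi> (exp1 z)"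
  shows "\<not> is_pole f z \<and> (z \<in> crit f \<longleftrightarrow> of_int l + 2 * of_real pi * \<i> * exp1 z * deriv \<Phi> (exp1 z) = 0)
     \<and> deriv f z = of_int l + 2 * of_real pi * \<i> * exp1 z * deriv \<Phi> (exp1 z)"
proof -
  define w where "w = exp1 z"
  define H where "H = (\<lambda>u. of_int l * u + \<Phi> (exp1 u))"
  have "\<Phi> analytic_on {w}"
    using nicely_meromorphic_on_imp_analytic_at[OF \<Phi>m _ np] exp1_nz by (auto simp: w_def)
  then obtain \<epsilon> where \<epsilon>: "\<epsilon> > 0" "\<Phi> holomorphic_on ball w \<epsilon>"
    unfolding analytic_on_def by auto
  have "open (exp1 -` ball w \<epsilon>)"
    using continuous_on_open_vimage[of UNIV exp1] holomorphic_on_imp_continuous_on[OF exp1_holo[of UNIV]]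
    by auto
  moreover have "z \<in> exp1 -` ball w \<epsilon>" using \<epsilon> by (simp add: w_def)
  ultimately obtain \<delta> where \<delta>: "\<delta> > 0" "ball z \<delta> \<subseteq> exp1 -` ball w \<epsilon>"
    by (meson openE)
  have Hh: "H holomorphic_on ball z \<delta>"
  proof -
    have "(\<Phi> \<circ> exp1) holomorphic_on ball z \<delta>"
      by (rule holomorphic_on_compose_gen[OF exp1_holo \<epsilon>(2)]) (use \<delta> in auto)
    thus ?thesis unfolding H_def comp_def by (intro holomorphic_intros)
  qed
  have iso: "isolated_singularity_at f z"
    using fm by (intro meromorphic_on_isolated_singularity)
      (auto simp: nicely_meromorphic_on_def intro: meromorphic_on_subset)
  then obtain r0 where r0: "r0 > 0" "f analytic_on ball z r0 - {z}"
    by (auto simp: isolated_singularity_at_def)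
  define \<rho> where "\<rho> = min \<delta> r0"
  have \<rho>: "\<rho> > 0" using \<delta> r0 by (simp add: \<rho>_def)
  have Hh': "H holomorphic_on ball z \<rho>" using Hh by (rule holomorphic_on_subset) (auto simp: \<rho>_def)
  have eqp: "f u = H u" if "u \<in> ball z \<rho> - {z}" for u
  proof -
    have "u \<in> ball z r0 - {z}" using that by (auto simp: \<rho>_def)
    hence "f analytic_on {u}" using analytic_on_subset[OF r0(2)] by blast
    hence "\<not> is_pole f u" by (rule analytic_at_imp_no_pole)
    thus ?thesis by (simp add: f_eq H_def)
  qed
  have Hc: "H \<midarrow>z\<rightarrow> H z"
    using holomorphic_on_imp_continuous_on[OF Hh'] \<rho>
    by (metis at_within_open continuous_on_def open_ball centre_in_ball)
  have "eventually (\<lambda>u. u \<in> ball z \<rho> - {z}) (at z)"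
    using \<rho> by (intro eventually_at_in_open) auto
  hence "eventually (\<lambda>u. H u = f u) (at z)" by eventually_elim (simp add: eqp)
  hence flim: "f \<midarrow>z\<rightarrow> H z" using Hc Lim_transform_eventually by blast
  have npf: "\<not> is_pole f z"
    using flim by (metis at_neq_bot not_tendsto_and_filterlim_at_infinity is_pole_def)
  have eq: "f u = H u" if "u \<in> ball z \<rho>" for u
    using eqp[of u] that npf f_eq[of z] by (cases "u = z") (auto simp: H_def)
  have crit_iff: "z \<in> crit f \<longleftrightarrow> deriv H z = 0"
    by (rule L1[OF \<rho> Hh']) (use eq in auto)
  have dH: "deriv H z = of_int l + 2 * of_real pi * \<i> * exp1 z * deriv \<Phi> (exp1 z)"
  proof -
    have d\<Phi>: "(\<Phi> has_field_derivative deriv \<Phi> w) (at (exp1 z))"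
      using holomorphic_derivI[OF \<epsilon>(2) open_ball, of w UNIV] \<epsilon>(1) by (simp add: w_def)
    have "(H has_field_derivative of_int l * 1 + deriv \<Phi> w * (2 * of_real pi * \<i> * exp1 z)) (at z)"
      unfolding H_def
      by (intro DERIV_add DERIV_cmult DERIV_ident DERIV_chain2[OF d\<Phi> exp1_deriv])
    hence "deriv H z = of_int l * 1 + deriv \<Phi> w * (2 * of_real pi * \<i> * exp1 z)" by (rule DERIV_imp_deriv)
    thus ?thesis by (simp add: w_def algebra_simps)
  qed
  have "deriv f z = deriv H z"
  proof (rule deriv_cong_ev)
    have "eventually (\<lambda>v. v \<in> ball z \<rho>) (nhds z)"
      using \<rho> by (intro eventually_nhds_in_open) auto
    thus "eventually (\<lambda>v. f v = H v) (nhds z)" by eventually_elim (use eq in auto)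
  qed auto
  thus ?thesis using npf crit_iff dH by simp
qed

lemma G_reg:
  fixes g \<Phi> :: "complex \<Rightarrow> complex" and l :: int
  assumes \<Phi>m: "\<Phi> nicely_meromorphic_on (- {0})"
    and g_eq: "\<And>w. w \<noteq> 0 \<Longrightarrow> \<not> is_pole \<Phi> w \<Longrightarrow> g w = w powi l * exp (2 * of_real pi * \<i> * \<Phi> w)"
    and w0: "w \<noteq> 0" and np: "\<not> is_pole \<Phi> w"
  shows "w \<in> crit g \<longleftrightarrow> of_int l + 2 * of_real pi * \<i> * w * deriv \<Phi> w = 0"
proof -
  have "\<Phi> analytic_on {w}"
    using nicely_meromorphic_on_imp_analytic_at[OF \<Phi>m _ np] w0 by auto
  then obtain \<epsilon>0 where \<epsilon>0: "\<epsilon>0 > 0" "\<Phi> holomorphic_on ball w \<epsilon>0"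
    unfolding analytic_on_def by auto
  define \<epsilon> where "\<epsilon> = min \<epsilon>0 (norm w)"
  have \<epsilon>: "\<epsilon> > 0" using \<epsilon>0 w0 by (simp add: \<epsilon>_def)
  have h\<epsilon>: "\<Phi> holomorphic_on ball w \<epsilon>" using \<epsilon>0(2) by (rule holomorphic_on_subset) (auto simp: \<epsilon>_def)
  have nz: "u \<noteq> 0" if "u \<in> ball w \<epsilon>" for u
    using that by (auto simp: \<epsilon>_def dist_norm)
  define G where "G = (\<lambda>u. u powi l * exp (2 * of_real pi * \<i> * \<Phi> u))"
  have Gh: "G holomorphic_on ball w \<epsilon>"
    unfolding G_def using h\<epsilon> nz by (intro holomorphic_intros) auto
  have eq: "g u = G u" if "u \<in> ball w \<epsilon>" for u
  proof -
    have "\<Phi> analytic_on {u}" using holomorphic_on_imp_analytic_at[OF h\<epsilon> open_ball that] .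
    hence "\<not> is_pole \<Phi> u" by (rule analytic_at_imp_no_pole)
    thus ?thesis using g_eq nz[OF that] by (simp add: G_def)
  qed
  have "w \<in> crit g \<longleftrightarrow> deriv G w = 0"
    by (rule L1[OF \<epsilon> Gh]) (use eq in auto)
  also have "deriv G w = exp (2 * of_real pi * \<i> * \<Phi> w) * w powi (l - 1) * (of_int l + 2 * of_real pi * \<i> * w * deriv \<Phi> w)"
  proof -
    have d\<Phi>: "(\<Phi> has_field_derivative deriv \<Phi> w) (at w)"
      using \<epsilon> by (intro holomorphic_derivI[OF h\<epsilon>]) auto
    have "(G has_field_derivative (of_int l * w powi (l - 1) * 1) * exp (2 * of_real pi * \<i> * \<Phi> w)
            + (exp (2 * of_real pi * \<i> * \<Phi> w) * (2 * of_real pi * \<i> * deriv \<Phi> w)) * w powi l) (at w)"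
      unfolding G_def
    proof (rule DERIV_mult)
      show "((\<lambda>x. x powi l) has_field_derivative of_int l * w powi (l - 1) * 1) (at w)"
        using w0 by (intro DERIV_power_int DERIV_ident) auto
      show "((\<lambda>x. exp (2 * of_real pi * \<i> * \<Phi> x)) has_field_derivative exp (2 * of_real pi * \<i> * \<Phi> w) * (2 * of_real pi * \<i> * deriv \<Phi> w)) (at w)"
        by (rule DERIV_chain2[OF DERIV_exp DERIV_cmult[OF d\<Phi>]])
    qed
    hence "deriv G w = (of_int l * w powi (l - 1) * 1) * exp (2 * of_real pi * \<i> * \<Phi> w)
            + (exp (2 * of_real pi * \<i> * \<Phi> w) * (2 * of_real pi * \<i> * deriv \<Phi> w)) * w powi l"
      by (rule DERIV_imp_deriv)
    moreover have "w powi l = w powi (l - 1) * w"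
      using w0 by (simp add: power_int_diff)
    ultimately show ?thesis by (simp add: algebra_simps)
  qed
  also have "\<dots> = 0 \<longleftrightarrow> of_int l + 2 * of_real pi * \<i> * w * deriv \<Phi> w = 0"
    using w0 by simp
  finally show ?thesis .
qed

lemma G_pole:
  fixes g \<Phi> :: "complex \<Rightarrow> complex" and l :: int
  assumes \<Phi>m: "\<Phi> nicely_meromorphic_on (- {0})"
    and g_eq: "\<And>w. w \<noteq> 0 \<Longrightarrow> \<not> is_pole \<Phi> w \<Longrightarrow> g w = w powi l * exp (2 * of_real pi * \<i> * \<Phi> w)"
    and w0: "w \<noteq> 0" and p: "is_pole \<Phi> w"
  shows "w \<notin> crit g"
proof -
  have iso: "isolated_singularity_at \<Phi> w"
    using \<Phi>m w0 by (intro meromorphic_on_isolated_singularity)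
      (auto simp: nicely_meromorphic_on_def intro: meromorphic_on_subset)
  have "eventually (\<lambda>u. g u = u powi l * exp (2 * of_real pi * \<i> * \<Phi> u)) (at w)"
    using eventually_not_pole[OF iso] eventually_neq_at_within[of 0 w UNIV]
    by eventually_elim (auto intro: g_eq)
  from E_ess[OF iso p w0 this] show ?thesis
    by (auto simp: crit_def defined_at_def meromorphic_at_iff)
qed

theorem proposition3p7:
  fixes f g \<Phi> :: "complex \<Rightarrow> complex" and l :: int
  assumes f_tr: "transcendental_mero f"
    and \<Phi>_mero: "\<Phi> nicely_meromorphic_on (- {0})"
    and f_eq: "\<And>z. \<not> is_pole f z \<Longrightarrow> f z = of_int l * z + \<Phi> (exp1 z)"
    and g_eq: "\<And>w. w \<noteq> 0 \<Longrightarrow> \<not> is_pole \<Phi> w \<Longrightarrow> g w = w powi l * exp (2 * of_real pi * \<i> * \<Phi> w)"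
    and proj: "\<And>z. \<not> is_pole f z \<Longrightarrow> g (exp1 z) = exp1 (f z)"
  shows "crit g - {0} = exp1 ` (crit f - {z. is_pole f z})
     \<and> ((\<exists>z. \<not> is_pole f z \<and> deriv f z = 0) \<longrightarrow> infinite (crit f) \<and> crit g - {0} \<noteq> {})
     \<and> (0 \<in> crit g \<longleftrightarrow> defined_at g 0 \<and>
           (\<bar>l\<bar> \<ge> 2 \<or> (l = 0 \<and> deriv (remove_sings \<Phi>) 0 = 0)))
     \<and> (0 \<in> crit (\<lambda>u. g (inverse u)) \<longleftrightarrow> defined_at (\<lambda>u. g (inverse u)) 0 \<and>
           (\<bar>l\<bar> \<ge> 2 \<or> (l = 0 \<and> deriv (remove_sings (\<lambda>u. \<Phi> (inverse u))) 0 = 0)))"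
  proof -
  have fm: "f nicely_meromorphic_on UNIV" using f_tr by (simp add: transcendental_mero_def)
  define Q where "Q = (\<lambda>w. of_int l + 2 * of_real pi * \<i> * w * deriv \<Phi> w)"
  have Freg: "\<not> is_pole f z \<and> (z \<in> crit f \<longleftrightarrow> Q (exp1 z) = 0) \<and> deriv f z = Q (exp1 z)"
    if "\<not> is_pole \<Phi> (exp1 z)" for z
    unfolding Q_def by (rule F_reg[OF fm \<Phi>_mero f_eq that])
  have Greg: "w \<in> crit g \<longleftrightarrow> Q w = 0" if "w \<noteq> 0" "\<not> is_pole \<Phi> w" for w
    unfolding Q_def by (rule G_reg[OF \<Phi>_mero g_eq that])
  have Gpole: "w \<notin> crit g" if "w \<noteq> 0" "is_pole \<Phi> w" for w
    by (rule G_pole[OF \<Phi>_mero g_eq that])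
  have Fpole: "is_pole f z" if "is_pole \<Phi> (exp1 z)" for z
    by (rule F_pole[OF fm f_eq that])
  have P1: "crit g - {0} = exp1 ` (crit f - {z. is_pole f z})"
  proof (intro equalityI subsetI)
    fix w assume w: "w \<in> crit g - {0}"
    hence w0: "w \<noteq> 0" "w \<in> crit g" by auto
    have np: "\<not> is_pole \<Phi> w" using Gpole w0 by blast
    define z where "z = Ln w / (2 * of_real pi * \<i>)"
    have ez: "exp1 z = w" using exp1_surj[OF w0(1)] by (simp add: z_def)
    have "z \<in> crit f" "\<not> is_pole f z" using Freg[of z] Greg[OF w0(1) np] w0(2) np ez by auto
    thus "w \<in> exp1 ` (crit f - {z. is_pole f z})" using ez by auto
  next
    fix w assume "w \<in> exp1 ` (crit f - {z. is_pole f z})"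
    then obtain z where z: "z \<in> crit f" "\<not> is_pole f z" "w = exp1 z" by auto
    have np: "\<not> is_pole \<Phi> (exp1 z)" using Fpole z(2) by blast
    have "Q (exp1 z) = 0" using Freg[OF np] z(1) by auto
    thus "w \<in> crit g - {0}" using Greg[OF exp1_nz np] z(3) exp1_nz by auto
  qed
  have P2: "(\<exists>z. \<not> is_pole f z \<and> deriv f z = 0) \<longrightarrow> infinite (crit f) \<and> crit g - {0} \<noteq> {}"
  proof
    assume "\<exists>z. \<not> is_pole f z \<and> deriv f z = 0"
    then obtain z0 where z0: "\<not> is_pole f z0" "deriv f z0 = 0" by auto
    have np: "\<not> is_pole \<Phi> (exp1 z0)" using Fpole z0(1) by blast
    have Q0: "Q (exp1 z0) = 0" using Freg[OF np] z0(2) by auto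
    have sub: "range (\<lambda>n::int. z0 + of_int n) \<subseteq> crit f"
    proof
      fix x assume "x \<in> range (\<lambda>n::int. z0 + of_int n)"
      then obtain n :: int where x: "x = z0 + of_int n" by auto
      have e: "exp1 x = exp1 z0" using exp1_shift x by simp
      show "x \<in> crit f" using Freg[of x] e np Q0 by auto
    qed
    have "inj (\<lambda>n::int. z0 + of_int n)" by (auto simp: inj_def)
    hence "infinite (range (\<lambda>n::int. z0 + of_int n))"
      using infinite_UNIV_int by (auto dest: finite_imageD)
    hence "infinite (crit f)" using sub infinite_super by blast
    moreover have "exp1 z0 \<in> crit g - {0}" using Greg[OF exp1_nz np] Q0 exp1_nz by auto
    ultimately show "infinite (crit f) \<and> crit g - {0} \<noteq> {}" by auto
  qed
  have \<Phi>iso: "isolated_singularity_at \<Phi> w" if "w \<noteq> 0" for w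
    using \<Phi>_mero that by (intro meromorphic_on_isolated_singularity)
      (auto simp: nicely_meromorphic_on_def intro: meromorphic_on_subset)
  have \<Phi>nice: "\<Phi> analytic_on {w}" if "w \<noteq> 0" "\<not> is_pole \<Phi> w" for w
    using nicely_meromorphic_on_imp_analytic_at[OF \<Phi>_mero _ that(2)] that(1) by auto
  have P3: "0 \<in> crit g \<longleftrightarrow> defined_at g 0 \<and>
           (\<bar>l\<bar> \<ge> 2 \<or> (l = 0 \<and> deriv (remove_sings \<Phi>) 0 = 0))"
    using M[where \<Psi> = \<Phi> and k = g and m = l, OF \<Phi>iso \<Phi>nice g_eq]
    by (auto simp: crit_def)
  have inv_lim: "filterlim inverse (at (inverse v)) (at v)" if "v \<noteq> 0" for v :: complex
    unfolding filterlim_at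
  proof
    show "eventually (\<lambda>u. inverse u \<in> UNIV \<and> inverse u \<noteq> inverse v) (at v)"
      using eventually_neq_at_within[of v v UNIV] by eventually_elim auto
    show "inverse \<midarrow>v\<rightarrow> inverse v" using that by (intro tendsto_intros) auto
  qed
  have \<Psi>pole: "is_pole (\<lambda>u. \<Phi> (inverse u)) u" if "u \<noteq> 0" "is_pole \<Phi> (inverse u)" for u
    using filterlim_compose[OF that(2)[unfolded is_pole_def] inv_lim[OF that(1)]]
    by (simp add: is_pole_def)
  have \<Psi>iso: "isolated_singularity_at (\<lambda>u. \<Phi> (inverse u)) w" if "w \<noteq> 0" for w
    by (rule isolated_singularity_at_compose[OF \<Phi>iso]) (use that in \<open>auto intro!: analytic_intros\<close>)
  have \<Psi>nice: "(\<lambda>u. \<Phi> (inverse u)) analytic_on {w}" if "w \<noteq> 0" "\<not> is_pole (\<lambda>u. \<Phi> (inverse u)) w" for w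
  proof -
    have "\<not> is_pole \<Phi> (inverse w)" using \<Psi>pole that by blast
    hence a: "\<Phi> analytic_on {inverse w}" using \<Phi>nice that(1) by simp
    have "inverse analytic_on {w}" using that(1) by (auto intro!: analytic_intros)
    from analytic_on_compose_gen[OF this a] show ?thesis by (simp add: comp_def)
  qed
  have keq: "g (inverse u) = u powi (- l) * exp (2 * of_real pi * \<i> * \<Phi> (inverse u))"
    if "u \<noteq> 0" "\<not> is_pole (\<lambda>u. \<Phi> (inverse u)) u" for u
  proof -
    have "\<not> is_pole \<Phi> (inverse u)" using \<Psi>pole that by blast
    hence "g (inverse u) = inverse u powi l * exp (2 * of_real pi * \<i> * \<Phi> (inverse u))"
      using g_eq that(1) by simp
    thus ?thesis by (simp add: power_int_inverse power_int_minus)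
  qed
  have P4: "0 \<in> crit (\<lambda>u. g (inverse u)) \<longleftrightarrow> defined_at (\<lambda>u. g (inverse u)) 0 \<and>
           (\<bar>l\<bar> \<ge> 2 \<or> (l = 0 \<and> deriv (remove_sings (\<lambda>u. \<Phi> (inverse u))) 0 = 0))"
    using M[where \<Psi> = "\<lambda>u. \<Phi> (inverse u)" and k = "\<lambda>u. g (inverse u)" and m = "- l", OF \<Psi>iso \<Psi>nice keq]
    by (auto simp: crit_def)
  show ?thesis using P1 P2 P3 P4 by blast
qed

end
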